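(* Let $R$ be an involutive $K$-algebra and $t$ a canonical, $K$-linear, $R$-valued trace on $L_K(E)$. (1) Let $p,q$ be paths with $\mathbf{r}(p)=\mathbf{r}(q)$, let $r_1,\dots,r_m$ be paths with $\mathbf{s}(r_i)=\mathbf{r}(p)$, and let $a_1,\dots,a_m\in K$. Put $x=\sum_{i=1}^m a_i\,pr_ir_i^*q^*$ and $y=\sum_{i=1}^m a_i\,r_ir_i^*$. Then $t(xx^* )=t(yy^* )$. (2) Suppose further that $t$ satisfies condition (P). Let $v$ be a vertex, let $e_1,\dots,e_m$ be distinct edges in $\mathbf{s}^{-1}(v)$, for each $i$ let $r_{i1},\dots,r_{im_i}$ be paths with $\mathbf{s}(r_{ij})=\mathbf{r}(e_i)$, and let $a,a_{ij}\in K$. Put $x=\sum_{i=1}^m\sum_{j=1}^{m_i}a_{ij}\,e_ir_{ij}r_{ij}^*e_i^*+av$ and $y=\sum_{i=1}^m\sum_{j=1}^{m_i}a_{ij}\,e_ir_{ij}r_{ij}^*e_i^*+a\sum_{i=1}^me_ie_i^*$. Then $t(xx^* )\ge t(yy^* )$ in $R$.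
   Context: A (directed) graph $E=(E^0,E^1,\mathbf{s},\mathbf{r})$ has vertex set $E^0$, edge set $E^1$, source and range maps; no finiteness or countability is assumed. A path is a vertex $v$ (length $0$) or a sequence $p=e_1\cdots e_n$ of edges with $\mathbf{r}(e_i)=\mathbf{s}(e_{i+1})$, $\mathbf{s}(p)=\mathbf{s}(e_1)$, $\mathbf{r}(p)=\mathbf{r}(e_n)$. A vertex $v$ is regular if $\mathbf{s}^{-1}(v)$ is nonempty and finite. $K$ is a field with an arbitrary involution $a\mapsto a^*$. $L_K(E)$ is the free $K$-algebra generated by $E^0\cup E^1\cup\{e^*:e\in E^1\}$ subject to (V) $vw=\delta_{v,w}v$; (E1) $\mathbf{s}(e)e=e\mathbf{r}(e)=e$; (E2) $\mathbf{r}(e)e^*=e^*\mathbf{s}(e)=e^*$; (CK1) $e^*f=\delta_{e,f}\mathbf{r}(e)$; (CK2) $v=\sum_{e\in\mathbf{s}^{-1}(v)}ee^*$ for regular $v$; $p^*=e_n^*\cdots e_1^*$, $v^*=v$, and $L_K(E)$ is involutive via $(\sum a_ip_iq_i^* )^*=\sum a_i^*q_ip_i^*$. An involutive $K$-algebra is a $K$-algebra with an involution ($(xy)^*=y^*x^*$, $x^{**}=x$, additive) satisfying $(ax)^*=a^*x^*$; in it $x\ge0$ means $x$ is a finite sum of elements $zz^*$, and $x\ge y$ means $x-y\ge0$. A trace is an additive map with $t(xy)=t(yx)$; $K$-linear means $t(ax)=at(x)$. A trace on $L_K(E)$ is canonical if $t(pq^* )=\delta_{p,q}t(\mathbf{r}(p))$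 for all paths $p,q$ with $\mathbf{r}(p)=\mathbf{r}(q)$. Condition (P): $t\big(v-\sum_{e\in I}\mathbf{r}(e)\big)\ge0$ for every vertex $v$ and every finite subset $I\subseteq\mathbf{s}^{-1}(v)$ (for $I=\emptyset$ this reads $t(v)\ge0$). *)

theory Defs
  imports Main
begin

text \<open>A graph E is given by types 'v (vertices, E^0 = UNIV) and 'e (edges, E^1 = UNIV)
  together with source and range maps src, rng :: 'e => 'v. No finiteness is assumed.\<close>

text \<open>Generators of the free algebra: vertices, real edges e, and ghost edges e^*.\<close>
datatype ('v, 'e) gen = V 'v | Ed 'e | Gh 'e

text \<open>Elements of the free (non-unital) K-algebra on the generators: finitely supported
  K-valued functions on nonempty words. We use functions on all words and restrict to
  the carrier FA below.\<close>
type_synonym ('v, 'e, 'k) fa = "('v, 'e) gen list \<Rightarrow> 'k"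

definition FA :: "('v, 'e, 'k::zero) fa set" where
  "FA = {f. finite {w. f w \<noteq> 0} \<and> f [] = 0}"

definition fa_word :: "('v, 'e) gen list \<Rightarrow> ('v, 'e, 'k::zero_neq_one) fa" where
  "fa_word u = (\<lambda>w. if w = u then 1 else 0)"

definition fa_zero :: "('v, 'e, 'k::zero) fa" where
  "fa_zero = (\<lambda>w. 0)"

definition fa_add :: "('v, 'e, 'k::plus) fa \<Rightarrow> ('v, 'e, 'k) fa \<Rightarrow> ('v, 'e, 'k) fa" where
  "fa_add f g = (\<lambda>w. f w + g w)"

definition fa_diff :: "('v, 'e, 'k::minus) fa \<Rightarrow> ('v, 'e, 'k) fa \<Rightarrow> ('v, 'e, 'k) fa" where
  "fa_diff f g = (\<lambda>w. f w - g w)"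

definition fa_smult :: "'k::times \<Rightarrow> ('v, 'e, 'k) fa \<Rightarrow> ('v, 'e, 'k) fa" where
  "fa_smult c f = (\<lambda>w. c * f w)"

definition fa_sum :: "('a \<Rightarrow> ('v, 'e, 'k::comm_monoid_add) fa) \<Rightarrow> 'a set \<Rightarrow> ('v, 'e, 'k) fa" where
  "fa_sum F A = (\<lambda>w. \<Sum>x\<in>A. F x w)"

definition fa_mult :: "('v, 'e, 'k::semiring_0) fa \<Rightarrow> ('v, 'e, 'k) fa \<Rightarrow> ('v, 'e, 'k) fa" where
  "fa_mult f g = (\<lambda>w. \<Sum>i\<le>length w. f (take i w) * g (drop i w))"

fun gstar :: "('v, 'e) gen \<Rightarrow> ('v, 'e) gen" where
  "gstar (V v) = V v"
| "gstar (Ed e) = Gh e"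
| "gstar (Gh e) = Ed e"

definition wstar :: "('v, 'e) gen list \<Rightarrow> ('v, 'e) gen list" where
  "wstar w = rev (map gstar w)"

definition fa_star :: "('k \<Rightarrow> 'k) \<Rightarrow> ('v, 'e, 'k) fa \<Rightarrow> ('v, 'e, 'k) fa" where
  "fa_star invK f = (\<lambda>w. invK (f (wstar w)))"

definition regular :: "('e \<Rightarrow> 'v) \<Rightarrow> 'v \<Rightarrow> bool" where
  "regular src v \<longleftrightarrow> finite {e. src e = v} \<and> {e. src e = v} \<noteq> {}"

inductive_set LPA_rels :: "('e \<Rightarrow> 'v) \<Rightarrow> ('e \<Rightarrow> 'v) \<Rightarrow> ('v, 'e, 'k::field) fa set"
  for src rng where
  relV: "fa_diff (fa_word [V v, V w]) (if v = w then fa_word [V v] else fa_zero) \<in> LPA_rels src rng"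
| relE1s: "fa_diff (fa_word [V (src e), Ed e]) (fa_word [Ed e]) \<in> LPA_rels src rng"
| relE1r: "fa_diff (fa_word [Ed e, V (rng e)]) (fa_word [Ed e]) \<in> LPA_rels src rng"
| relE2r: "fa_diff (fa_word [V (rng e), Gh e]) (fa_word [Gh e]) \<in> LPA_rels src rng"
| relE2s: "fa_diff (fa_word [Gh e, V (src e)]) (fa_word [Gh e]) \<in> LPA_rels src rng"
| relCK1: "fa_diff (fa_word [Gh e, Ed f]) (if e = f then fa_word [V (rng e)] else fa_zero) \<in> LPA_rels src rng"
| relCK2: "regular src v \<Longrightarrow>
    fa_diff (fa_word [V v]) (fa_sum (\<lambda>e. fa_word [Ed e, Gh e]) {e. src e = v}) \<in> LPA_rels src rng"

text \<open>The two-sided ideal of the (non-unital) free algebra generated by the relations: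
  the K-span of all u r w with r a relation and u, w (possibly empty) words.\<close>
inductive_set LPA_ideal :: "('e \<Rightarrow> 'v) \<Rightarrow> ('e \<Rightarrow> 'v) \<Rightarrow> ('v, 'e, 'k::field) fa set"
  for src rng where
  gen: "r \<in> LPA_rels src rng \<Longrightarrow> r \<in> LPA_ideal src rng"
| zero: "fa_zero \<in> LPA_ideal src rng"
| add: "a \<in> LPA_ideal src rng \<Longrightarrow> b \<in> LPA_ideal src rng \<Longrightarrow> fa_add a b \<in> LPA_ideal src rng"
| mul: "a \<in> LPA_ideal src rng \<Longrightarrow>
    fa_smult c (fa_mult (fa_mult (fa_word u) a) (fa_word w)) \<in> LPA_ideal src rng"

text \<open>A path is represented as (v, es): for es = [] it is the vertex v (length 0);
  otherwise it is the edge sequence es, and v must be the source of its first edge.\<close>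
definition is_path :: "('e \<Rightarrow> 'v) \<Rightarrow> ('e \<Rightarrow> 'v) \<Rightarrow> 'v \<times> 'e list \<Rightarrow> bool" where
  "is_path src rng p \<longleftrightarrow> (case p of (v, es) \<Rightarrow>
     (es \<noteq> [] \<longrightarrow> src (hd es) = v) \<and>
     (\<forall>i. Suc i < length es \<longrightarrow> rng (es ! i) = src (es ! Suc i)))"

definition p_src :: "'v \<times> 'e list \<Rightarrow> 'v" where
  "p_src p = fst p"

definition p_rng :: "('e \<Rightarrow> 'v) \<Rightarrow> 'v \<times> 'e list \<Rightarrow> 'v" where
  "p_rng rng p = (if snd p = [] then fst p else rng (last (snd p)))"

definition pw :: "'v \<times> 'e list \<Rightarrow> ('v, 'e) gen list" where
  "pw p = (if snd p = [] then [V (fst p)] else map Ed (snd p))"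

definition field_involution :: "('k::field \<Rightarrow> 'k) \<Rightarrow> bool" where
  "field_involution invK \<longleftrightarrow>
     (\<forall>a b. invK (a + b) = invK a + invK b) \<and>
     (\<forall>a b. invK (a * b) = invK a * invK b) \<and>
     (\<forall>a. invK (invK a) = a)"

definition inv_K_algebra ::
  "('k::field \<Rightarrow> 'k) \<Rightarrow> ('k \<Rightarrow> 'r::ring \<Rightarrow> 'r) \<Rightarrow> ('r \<Rightarrow> 'r) \<Rightarrow> bool" where
  "inv_K_algebra invK sm st \<longleftrightarrow>
     (\<forall>a x y. sm a (x + y) = sm a x + sm a y) \<and>
     (\<forall>a b x. sm (a + b) x = sm a x + sm b x) \<and>
     (\<forall>a b x. sm (a * b) x = sm a (sm b x)) \<and>
     (\<forall>x. sm 1 x = x) \<and>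
     (\<forall>a x y. sm a (x * y) = sm a x * y \<and> sm a (x * y) = x * sm a y) \<and>
     (\<forall>x y. st (x * y) = st y * st x) \<and>
     (\<forall>x. st (st x) = x) \<and>
     (\<forall>x y. st (x + y) = st x + st y) \<and>
     (\<forall>a x. st (sm a x) = sm (invK a) (st x))"

definition R_nonneg :: "('r::ring \<Rightarrow> 'r) \<Rightarrow> 'r \<Rightarrow> bool" where
  "R_nonneg st x \<longleftrightarrow> (\<exists>zs. x = sum_list (map (\<lambda>z. z * st z) zs))"

definition R_ge :: "('r::ring \<Rightarrow> 'r) \<Rightarrow> 'r \<Rightarrow> 'r \<Rightarrow> bool" where
  "R_ge st x y \<longleftrightarrow> R_nonneg st (x - y)"

text \<open>A map on L_K(E) = FA / LPA_ideal is represented by a map t on FA that is constant on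
  cosets of the ideal. Additivity, the trace property and K-linearity are required on FA
  (equivalently, of the induced map on the quotient).\<close>
definition LPA_trace ::
  "('e \<Rightarrow> 'v) \<Rightarrow> ('e \<Rightarrow> 'v) \<Rightarrow> (('v, 'e, 'k::field) fa \<Rightarrow> 'r::ring) \<Rightarrow> bool" where
  "LPA_trace src rng t \<longleftrightarrow>
     (\<forall>f\<in>FA. \<forall>g\<in>FA. fa_diff f g \<in> LPA_ideal src rng \<longrightarrow> t f = t g) \<and>
     (\<forall>f\<in>FA. \<forall>g\<in>FA. t (fa_add f g) = t f + t g) \<and>
     (\<forall>f\<in>FA. \<forall>g\<in>FA. t (fa_mult f g) = t (fa_mult g f))"

definition K_linear ::
  "('k::field \<Rightarrow> 'r::ring \<Rightarrow> 'r) \<Rightarrow> (('v, 'e, 'k) fa \<Rightarrow> 'r) \<Rightarrow> bool" where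
  "K_linear sm t \<longleftrightarrow> (\<forall>a. \<forall>f\<in>FA. t (fa_smult a f) = sm a (t f))"

definition canonical ::
  "('e \<Rightarrow> 'v) \<Rightarrow> ('e \<Rightarrow> 'v) \<Rightarrow> (('v, 'e, 'k::field) fa \<Rightarrow> 'r::ring) \<Rightarrow> bool" where
  "canonical src rng t \<longleftrightarrow>
     (\<forall>p q. is_path src rng p \<and> is_path src rng q \<and> p_rng rng p = p_rng rng q \<longrightarrow>
        t (fa_word (pw p @ wstar (pw q))) = (if p = q then t (fa_word [V (p_rng rng p)]) else 0))"

definition condP ::
  "('e \<Rightarrow> 'v) \<Rightarrow> ('e \<Rightarrow> 'v) \<Rightarrow> ('r::ring \<Rightarrow> 'r) \<Rightarrow> (('v, 'e, 'k::field) fa \<Rightarrow> 'r) \<Rightarrow> bool" where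
  "condP src rng st t \<longleftrightarrow>
     (\<forall>v I. finite I \<and> I \<subseteq> {e. src e = v} \<longrightarrow>
        R_nonneg st (t (fa_diff (fa_word [V v]) (fa_sum (\<lambda>e. fa_word [V (rng e)]) I))))"

end

theory Submission
  imports Defs
begin

definition comb :: "('k::field \<times> ('v,'e) gen list) list \<Rightarrow> ('v,'e,'k) fa" where
  "comb L = (\<lambda>w. \<Sum>(c,u)\<leftarrow>L. if u = w then c else 0)"

lemma comb_Nil[simp]: "comb [] = fa_zero"
  by (simp add: comb_def fa_zero_def)

lemma comb_append: "comb (A @ B) = fa_add (comb A) (comb B)"
  by (simp add: comb_def fa_add_def)

lemma comb_single: "comb [(c,u)] = fa_smult c (fa_word u)"
  by (auto simp: comb_def fa_smult_def fa_word_def)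

lemma comb_Cons: "comb ((c,u) # L) = fa_add (fa_smult c (fa_word u)) (comb L)"
  by (metis comb_append comb_single append_Cons append_Nil)

lemma comb_smult: "fa_smult c (comb L) = comb (map (\<lambda>(a,u). (c*a,u)) L)"
proof (induction L)
  case Nil thus ?case by (simp add: fa_smult_def fa_zero_def)
next
  case (Cons x L)
  obtain a u where x: "x = (a,u)" by fastforce
  show ?case using Cons by (auto simp: x comb_def fa_smult_def fun_eq_iff distrib_left)
qed

lemma fa_sum_comb: "fa_sum (\<lambda>i. comb (L i)) {..<m} = comb (concat (map L [0..<m]))"
proof (induction m)
  case 0 thus ?case by (simp add: fa_sum_def fa_zero_def)
next
  case (Suc m)
  thus ?case by (simp add: comb_append fa_sum_def fa_add_def fun_eq_iff)
qed

lemma mult_word_pt: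
  fixes u v w :: "('v,'e) gen list"
  shows "(fa_mult (fa_word u) (fa_word v) w :: 'k::field) = fa_word (u @ v) w"
proof -
  have "\<And>i. i \<le> length w \<Longrightarrow> (fa_word u (take i w) * fa_word v (drop i w) :: 'k)
       = (if i = length u \<and> w = u @ v then 1 else 0)"
  proof -
    fix i assume i: "i \<le> length w"
    have "(take i w = u \<and> drop i w = v) \<longleftrightarrow> (i = length u \<and> w = u @ v)"
      using i by (metis append_eq_conv_conj append_take_drop_id length_take min_absorb2)
    thus "(fa_word u (take i w) * fa_word v (drop i w) :: 'k) = (if i = length u \<and> w = u @ v then 1 else 0)"
      by (auto simp: fa_word_def)
  qed
  hence "fa_mult (fa_word u) (fa_word v) w = (\<Sum>i\<le>length w. (if i = length u \<and> w = u @ v then 1 else 0 :: 'k))"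
    unfolding fa_mult_def by (intro sum.cong) auto
  also have "\<dots> = fa_word (u @ v) w"
    by (auto simp: fa_word_def sum.delta)
  finally show ?thesis .
qed

lemma mult_word: "fa_mult (fa_word u) (fa_word v) = (fa_word (u @ v) :: ('v,'e,'k::field) fa)"
  using mult_word_pt by (rule ext)

lemma mult_add_left: "fa_mult (fa_add f g) h = fa_add (fa_mult f h) (fa_mult g h)"
  by (simp add: fa_mult_def fa_add_def distrib_right sum.distrib)
lemma mult_add_right: "fa_mult f (fa_add g h) = fa_add (fa_mult f g) (fa_mult f h)"
  by (simp add: fa_mult_def fa_add_def distrib_left sum.distrib)
lemma mult_diff_left: "fa_mult (fa_diff f g) (h::('v,'e,'k::field) fa) = fa_diff (fa_mult f h) (fa_mult g h)"
  by (simp add: fa_mult_def fa_diff_def left_diff_distrib sum_subtractf)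
lemma mult_diff_right: "fa_mult (f::('v,'e,'k::field) fa) (fa_diff g h) = fa_diff (fa_mult f g) (fa_mult f h)"
  by (simp add: fa_mult_def fa_diff_def right_diff_distrib sum_subtractf)
lemma mult_zero_left[simp]: "fa_mult fa_zero h = fa_zero"
  by (simp add: fa_mult_def fa_zero_def)
lemma mult_zero_right[simp]: "fa_mult h fa_zero = fa_zero"
  by (simp add: fa_mult_def fa_zero_def)
lemma mult_smult_left: "fa_mult (fa_smult c f) (h::('v,'e,'k::field) fa) = fa_smult c (fa_mult f h)"
  by (simp add: fa_mult_def fa_smult_def sum_distrib_left mult.assoc)
lemma mult_smult_right: "fa_mult f (fa_smult c (h::('v,'e,'k::field) fa)) = fa_smult c (fa_mult f h)"
  by (simp add: fa_mult_def fa_smult_def sum_distrib_left mult.left_commute)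

lemma smult_add: "fa_smult c (fa_add f (g::('v,'e,'k::field) fa)) = fa_add (fa_smult c f) (fa_smult c g)"
  by (simp add: fa_smult_def fa_add_def distrib_left)

lemma mult_word_comb: "fa_mult (fa_word u) (comb ys) = comb (map (\<lambda>(b,w). (b, u@w)) ys)"
proof (induction ys)
  case Nil thus ?case by simp
next
  case (Cons y ys)
  obtain b w where y: "y = (b,w)" by fastforce
  show ?case using Cons by (simp add: y comb_Cons mult_add_right mult_smult_right mult_word)
qed

lemma mult_comb: "fa_mult (comb xs) (comb ys) =
   comb (concat (map (\<lambda>(a,u). map (\<lambda>(b,w). (a*b, u@w)) ys) xs))"
proof (induction xs)
  case Nil thus ?case by simp
next
  case (Cons x xs)
  obtain a u where x: "x = (a,u)" by fastforce
  have "fa_smult a (comb (map (\<lambda>(b, w). (b, u @ w)) ys)) = comb (map (\<lambda>(b, w). (a * b, u @ w)) ys)"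
    unfolding comb_smult map_map by (intro arg_cong[where f=comb] map_cong) auto
  thus ?case using Cons by (simp add: x comb_Cons mult_add_left mult_smult_left mult_word_comb comb_append)
qed

lemma gstar_gstar[simp]: "gstar (gstar g) = g" by (cases g) auto
lemma wstar_wstar[simp]: "wstar (wstar u) = u" by (simp add: wstar_def rev_map comp_def)
lemma wstar_append[simp]: "wstar (u @ v) = wstar v @ wstar u" by (simp add: wstar_def)
lemma wstar_eq_iff: "(u = wstar w) = (wstar u = w)" by auto
lemma wstar_Nil[simp]: "wstar [] = []" by (simp add: wstar_def)
lemma wstar_Cons[simp]: "wstar (g # u) = wstar u @ [gstar g]" by (simp add: wstar_def)

lemma star_comb:
  assumes add: "\<And>a b. invK (a + b) = invK a + invK b" and z: "invK 0 = 0"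
  shows "fa_star invK (comb xs) = comb (map (\<lambda>(a,u). (invK a, wstar u)) xs)"
proof (induction xs)
  case Nil thus ?case by (simp add: fa_star_def fa_zero_def z)
next
  case (Cons x xs)
  obtain a u where x: "x = (a,u)" by fastforce
  show ?case using Cons
    by (auto simp: x comb_def fa_star_def fun_eq_iff add z wstar_eq_iff)
qed

lemma comb_FA: "\<forall>(c,u)\<in>set L. u \<noteq> [] \<Longrightarrow> comb L \<in> FA"
proof -
  assume a: "\<forall>(c,u)\<in>set L. u \<noteq> []"
  have "{w. comb L w \<noteq> 0} \<subseteq> snd ` set L"
  proof
    fix w assume "w \<in> {w. comb L w \<noteq> 0}"
    hence "(\<Sum>(c,u)\<leftarrow>L. if u = w then c else 0) \<noteq> 0" by (simp add: comb_def)
    thus "w \<in> snd ` set L"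
      by (induction L) (auto split: if_splits)
  qed
  hence "finite {w. comb L w \<noteq> 0}" by (rule finite_subset) simp
  moreover have "comb L [] = 0"
    using a unfolding comb_def by (induction L) auto
  ultimately show ?thesis by (simp add: FA_def)
qed



definition chain :: "('e \<Rightarrow> 'v) \<Rightarrow> ('e \<Rightarrow> 'v) \<Rightarrow> 'e list \<Rightarrow> bool" where
  "chain src rng es \<longleftrightarrow> (\<forall>i. Suc i < length es \<longrightarrow> rng (es ! i) = src (es ! Suc i))"

lemma chain_Cons: "chain src rng (e # es) \<longleftrightarrow> (es \<noteq> [] \<longrightarrow> rng e = src (hd es)) \<and> chain src rng es"
  unfolding chain_def
  apply (cases es)
   apply simp
  apply (auto simp: nth_Cons split: nat.splits)
  done

lemma is_path_iff: "is_path src rng (w, es) \<longleftrightarrow> (es \<noteq> [] \<longrightarrow> src (hd es) = w) \<and> chain src rng es"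
  by (simp add: is_path_def chain_def)

lemma wstar_Ed: "wstar (map Ed es) = rev (map Gh es)"
  by (simp add: wstar_def comp_def)

lemma word_FA: "u \<noteq> [] \<Longrightarrow> (fa_word u :: ('v,'e,'k::field) fa) \<in> FA"
proof -
  assume "u \<noteq> []"
  have "{w. (fa_word u w :: 'k) \<noteq> 0} \<subseteq> {u}" by (auto simp: fa_word_def)
  hence "finite {w. (fa_word u w :: 'k) \<noteq> 0}" by (rule finite_subset) simp
  with \<open>u \<noteq> []\<close> show ?thesis by (simp add: FA_def fa_word_def)
qed

lemma zero_FA[simp]: "fa_zero \<in> FA" by (simp add: FA_def fa_zero_def)

locale ctx =
  fixes src rng :: "'e \<Rightarrow> 'v"
    and invK :: "'k::field \<Rightarrow> 'k"
    and sm :: "'k \<Rightarrow> 'r::ring \<Rightarrow> 'r"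
    and st :: "'r \<Rightarrow> 'r"
    and t :: "('v, 'e, 'k) fa \<Rightarrow> 'r"
  assumes invK: "field_involution invK"
    and R: "inv_K_algebra invK sm st"
    and tr: "LPA_trace src rng t"
    and lin: "K_linear sm t"
begin

abbreviation T where "T u \<equiv> t (fa_word u)"

lemma invK_add: "invK (a + b) = invK a + invK b" using invK by (simp add: field_involution_def)
lemma invK_0: "invK 0 = 0"
proof -
  have "invK 0 + 0 = invK 0 + invK 0" using invK_add[of 0 0] by simp
  thus ?thesis by (metis add_left_cancel)
qed

lemma sm_add: "sm a (x + y) = sm a x + sm a y" using R unfolding inv_K_algebra_def by blast
lemma sm_0: "sm a 0 = 0" using sm_add[of a 0 0] by simp
lemma sm_diff: "sm a (x - y) = sm a x - sm a y"
  using sm_add[of a "x - y" y] by (simp add: eq_diff_eq)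
lemma sm_sum_list: "sm a (\<Sum>x\<leftarrow>xs. f x) = (\<Sum>x\<leftarrow>xs. sm a (f x))"
  by (induction xs) (simp_all add: sm_0 sm_add)
lemma sm_mult: "sm (a * b) x = sm a (sm b x)" using R unfolding inv_K_algebra_def by blast
lemma sm_times_l: "sm a (x * y) = sm a x * y" using R unfolding inv_K_algebra_def by blast
lemma sm_times_r: "sm a (x * y) = x * sm a y" using R unfolding inv_K_algebra_def by blast
lemma st_sm: "st (sm a x) = sm (invK a) (st x)" using R unfolding inv_K_algebra_def by blast

lemma t_add: "f \<in> FA \<Longrightarrow> g \<in> FA \<Longrightarrow> t (fa_add f g) = t f + t g"
  using tr by (simp add: LPA_trace_def)
lemma t_ideal: "f \<in> FA \<Longrightarrow> g \<in> FA \<Longrightarrow> fa_diff f g \<in> LPA_ideal src rng \<Longrightarrow> t f = t g"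
  using tr by (simp add: LPA_trace_def)
lemma t_comm: "f \<in> FA \<Longrightarrow> g \<in> FA \<Longrightarrow> t (fa_mult f g) = t (fa_mult g f)"
  using tr by (simp add: LPA_trace_def)
lemma t_smult: "f \<in> FA \<Longrightarrow> t (fa_smult a f) = sm a (t f)"
  using lin by (simp add: K_linear_def)
lemma t_zero: "t fa_zero = 0"
proof -
  have "fa_add fa_zero fa_zero = (fa_zero :: ('v,'e,'k) fa)" by (simp add: fa_add_def fa_zero_def)
  hence "t fa_zero = t fa_zero + t fa_zero" using t_add[of fa_zero fa_zero] by simp
  thus ?thesis by simp
qed

lemma T_comm: "T (X @ Y) = T (Y @ X)"
proof (cases "X = [] \<or> Y = []")
  case True thus ?thesis by auto
next
  case False
  thus ?thesis using t_comm[of "fa_word X" "fa_word Y"] word_FA[of X] word_FA[of Y] by (simp add: mult_word)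
qed

lemma t_comb: "\<forall>(c,u)\<in>set L. u \<noteq> [] \<Longrightarrow> t (comb L) = (\<Sum>(c,u)\<leftarrow>L. sm c (T u))"
proof (induction L)
  case Nil thus ?case by (simp add: t_zero)
next
  case (Cons x L)
  obtain c u where x: "x = (c,u)" by fastforce
  have "fa_smult c (fa_word u) \<in> FA" using comb_FA[of "[(c,u)]"] Cons.prems by (simp add: x comb_single)
  moreover have "comb L \<in> FA" using comb_FA Cons.prems by auto
  ultimately show ?case using Cons x by (simp add: comb_Cons t_add t_smult word_FA)
qed

lemma t_diff: "f \<in> FA \<Longrightarrow> g \<in> FA \<Longrightarrow> t (fa_diff f g) = t f - t g"
proof -
  assume f: "f \<in> FA" and g: "g \<in> FA"
  have d: "fa_diff f g \<in> FA"
  proof -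
    have "{w. fa_diff f g w \<noteq> 0} \<subseteq> {w. f w \<noteq> 0} \<union> {w. g w \<noteq> 0}" by (auto simp: fa_diff_def)
    moreover have "finite ({w. f w \<noteq> 0} \<union> {w. g w \<noteq> 0})" using f g by (simp add: FA_def)
    ultimately show ?thesis using f g by (auto simp: FA_def fa_diff_def intro: finite_subset)
  qed
  have "fa_add (fa_diff f g) g = f" by (simp add: fa_add_def fa_diff_def)
  hence "t f = t (fa_diff f g) + t g" using t_add[OF d g] by simp
  thus ?thesis by (simp add: eq_diff_eq)
qed

lemma T_rel:
  assumes "fa_diff (fa_word l) (fa_word r) \<in> (LPA_rels src rng :: ('v,'e,'k) fa set)" "l \<noteq> []" "r \<noteq> []"
  shows "T (A @ l @ B) = T (A @ r @ B)"
proof -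
  have "fa_smult 1 (fa_mult (fa_mult (fa_word A :: ('v,'e,'k) fa) (fa_diff (fa_word l) (fa_word r))) (fa_word B)) \<in> LPA_ideal src rng"
    using assms(1) by (intro LPA_ideal.mul LPA_ideal.gen)
  moreover have "fa_smult 1 (fa_mult (fa_mult (fa_word A :: ('v,'e,'k) fa) (fa_diff (fa_word l) (fa_word r))) (fa_word B))
     = fa_diff (fa_word (A @ l @ B)) (fa_word (A @ r @ B))"
    by (simp add: mult_diff_left mult_diff_right mult_word fa_smult_def)
  ultimately show ?thesis using assms(2,3) by (intro t_ideal word_FA) auto
qed

lemma T_rel0:
  assumes "fa_diff (fa_word l) fa_zero \<in> (LPA_rels src rng :: ('v,'e,'k) fa set)" "l \<noteq> []"
  shows "T (A @ l @ B) = 0"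
proof -
  have "fa_smult 1 (fa_mult (fa_mult (fa_word A :: ('v,'e,'k) fa) (fa_diff (fa_word l) fa_zero)) (fa_word B)) \<in> LPA_ideal src rng"
    using assms(1) by (intro LPA_ideal.mul LPA_ideal.gen)
  moreover have "fa_smult 1 (fa_mult (fa_mult (fa_word A :: ('v,'e,'k) fa) (fa_diff (fa_word l) fa_zero)) (fa_word B))
     = fa_diff (fa_word (A @ l @ B)) fa_zero"
    by (simp add: mult_diff_left mult_diff_right mult_word fa_smult_def)
  ultimately have "T (A @ l @ B) = t fa_zero" using assms(2) by (intro t_ideal word_FA) auto
  thus ?thesis by (simp add: t_zero)
qed

lemma VV: "T (A @ [V w, V w] @ B) = T (A @ [V w] @ B)"
  by (rule T_rel) (use LPA_rels.relV[where v=w and w=w] in auto)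
lemma VEd: "T (A @ [V (src e), Ed e] @ B) = T (A @ [Ed e] @ B)"
  by (rule T_rel) (use LPA_rels.relE1s[where e=e] in auto)
lemma EdV: "T (A @ [Ed e, V (rng e)] @ B) = T (A @ [Ed e] @ B)"
  by (rule T_rel) (use LPA_rels.relE1r[where e=e] in auto)
lemma VGh: "T (A @ [V (rng e), Gh e] @ B) = T (A @ [Gh e] @ B)"
  by (rule T_rel) (use LPA_rels.relE2r[where e=e] in auto)
lemma GhV: "T (A @ [Gh e, V (src e)] @ B) = T (A @ [Gh e] @ B)"
  by (rule T_rel) (use LPA_rels.relE2s[where e=e] in auto)
lemma CK1: "T (A @ [Gh e, Ed e] @ B) = T (A @ [V (rng e)] @ B)"
  by (rule T_rel) (use LPA_rels.relCK1[where e=e and f=e] in auto)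
lemma CK1ne: "e \<noteq> f \<Longrightarrow> T (A @ [Gh e, Ed f] @ B) = 0"
  by (rule T_rel0) (use LPA_rels.relCK1[where e=e and f=f] in auto)

end


context ctx begin

lemma collapse_aux:
  "es \<noteq> [] \<Longrightarrow> chain src rng es \<Longrightarrow>
   T (A @ rev (map Gh es) @ map Ed es @ B) = T (A @ [V (rng (last es))] @ B)"
proof (induction es arbitrary: A B)
  case Nil thus ?case by simp
next
  case (Cons e es)
  show ?case
  proof (cases "es = []")
    case True thus ?thesis using CK1[of A e B] by simp
  next
    case False
    then obtain f es' where es: "es = f # es'" by (cases es) auto
    have r: "rng e = src f" using Cons.prems(2) by (simp add: chain_Cons es)
    have "T (A @ rev (map Gh (e # es)) @ map Ed (e # es) @ B)
        = T ((A @ rev (map Gh es)) @ [Gh e, Ed e] @ (map Ed es @ B))" by simp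
    also have "\<dots> = T ((A @ rev (map Gh es)) @ [V (src f), Ed f] @ (map Ed es' @ B))"
      using CK1[of "A @ rev (map Gh es)" e "map Ed es @ B"] r by (simp add: es)
    also have "\<dots> = T ((A @ rev (map Gh es)) @ [Ed f] @ (map Ed es' @ B))" by (rule VEd)
    also have "\<dots> = T (A @ rev (map Gh es) @ map Ed es @ B)" by (simp add: es)
    also have "\<dots> = T (A @ [V (rng (last es))] @ B)"
      using Cons.IH[OF False] Cons.prems(2) by (simp add: chain_Cons)
    finally show ?thesis using False by simp
  qed
qed

lemma P1: "is_path src rng q \<Longrightarrow> T (A @ wstar (pw q) @ pw q @ B) = T (A @ [V (p_rng rng q)] @ B)"
proof -
  assume q: "is_path src rng q"
  obtain w es where qq: "q = (w, es)" by fastforce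
  show ?thesis
  proof (cases "es = []")
    case True thus ?thesis using VV[of A w B] by (simp add: qq pw_def p_rng_def wstar_def)
  next
    case False
    thus ?thesis using collapse_aux[of es A B] q
      by (simp add: qq pw_def p_rng_def wstar_Ed is_path_iff)
  qed
qed

lemma P2: "is_path src rng r \<Longrightarrow> T (A @ [V (p_src r)] @ pw r @ B) = T (A @ pw r @ B)"
proof -
  assume q: "is_path src rng r"
  obtain w es where qq: "r = (w, es)" by fastforce
  show ?thesis
  proof (cases es)
    case Nil thus ?thesis using VV[of A w B] by (simp add: qq pw_def p_src_def)
  next
    case (Cons f es')
    thus ?thesis using VEd[of A f "map Ed es' @ B"] q
      by (simp add: qq pw_def p_src_def is_path_iff)
  qed
qed

lemma P3: "is_path src rng r \<Longrightarrow> T (A @ wstar (pw r) @ [V (p_src r)] @ B) = T (A @ wstar (pw r) @ B)"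
proof -
  assume q: "is_path src rng r"
  obtain w es where qq: "r = (w, es)" by fastforce
  show ?thesis
  proof (cases es)
    case Nil thus ?thesis using VV[of A w B] by (simp add: qq pw_def p_src_def wstar_def)
  next
    case (Cons f es')
    thus ?thesis using GhV[of "A @ rev (map Gh es')" f B] q
      by (simp add: qq pw_def p_src_def is_path_iff wstar_Ed)
  qed
qed

definition S :: "('k \<times> ('v,'e) gen list) list \<Rightarrow> ('k \<times> ('v,'e) gen list) list \<Rightarrow> 'r" where
  "S A B = (\<Sum>(c,u)\<leftarrow>A. \<Sum>(d,w)\<leftarrow>B. sm (c * invK d) (T (u @ wstar w)))"

lemma sum_list_concat_map: "(\<Sum>x\<leftarrow>concat (map g xs). f x) = (\<Sum>y\<leftarrow>xs. \<Sum>x\<leftarrow>g y. f x)"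
  by (induction xs) auto

lemma t_xx:
  assumes "\<forall>(c,u)\<in>set A. u \<noteq> []"
  shows "t (fa_mult (comb A) (fa_star invK (comb B))) = S A B"
proof -
  have "t (fa_mult (comb A) (fa_star invK (comb B))) =
     t (comb (concat (map (\<lambda>(a,u). map (\<lambda>(b,w). (a*b, u@w)) (map (\<lambda>(a,u). (invK a, wstar u)) B)) A)))"
    by (simp add: star_comb invK_add invK_0 mult_comb)
  also have "\<dots> = (\<Sum>(c,u)\<leftarrow>concat (map (\<lambda>(a,u). map (\<lambda>(b,w). (a*b, u@w)) (map (\<lambda>(a,u). (invK a, wstar u)) B)) A). sm c (T u))"
    using assms by (intro t_comb) auto
  also have "\<dots> = S A B"
    by (simp add: S_def sum_list_concat_map comp_def case_prod_beta case_prod_beta')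
  finally show ?thesis .
qed

lemma S_append_l: "S (A @ A') B = S A B + S A' B" by (simp add: S_def)
lemma S_append_r: "S A (B @ B') = S A B + S A B'"
  by (induction A) (auto simp: S_def algebra_simps)

end


lemma fa_sum_words: "fa_sum (\<lambda>i. fa_smult (c i) (fa_word (u i))) {..<m} = comb (map (\<lambda>i. (c i, u i)) [0..<m])"
proof (induction m)
  case 0 thus ?case by (simp add: fa_sum_def fa_zero_def)
next
  case (Suc m)
  have "comb (map (\<lambda>i. (c i, u i)) [0..<Suc m]) = fa_add (comb (map (\<lambda>i. (c i, u i)) [0..<m])) (comb [(c m, u m)])"
    by (simp add: comb_append)
  thus ?case using Suc by (simp add: comb_single fa_sum_def fa_add_def fun_eq_iff)
qed

lemma sum_list_swap: "(\<Sum>x\<leftarrow>xs. \<Sum>y\<leftarrow>ys. f x y) = ( (\<Sum>y\<leftarrow>ys. \<Sum>x\<leftarrow>xs. f x y) :: 'a::comm_monoid_add)"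
  by (induction xs) (auto simp: sum_list_addf)

lemma sum_list_upt_delta:
  assumes "k < m" "\<And>i. i < m \<Longrightarrow> i \<noteq> k \<Longrightarrow> f i = 0"
  shows "(\<Sum>i\<leftarrow>[0..<m]. f i) = (f k :: 'a::comm_monoid_add)"
proof -
  have "(\<Sum>i\<leftarrow>[0..<m]. f i) = sum f {0..<m}" by (simp add: interv_sum_list_conv_sum_set_nat)
  also have "\<dots> = sum (\<lambda>i. if i = k then f k else 0) {0..<m}" using assms(2) by (intro sum.cong) auto
  also have "\<dots> = f k" using assms(1) by simp
  finally show ?thesis .
qed

context ctx begin

lemma part1_key:
  assumes p: "is_path src rng p" and q: "is_path src rng q" and pq: "p_rng rng p = p_rng rng q"
    and ri: "is_path src rng ri" "p_src ri = p_rng rng p"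
    and rj: "is_path src rng rj" "p_src rj = p_rng rng p"
  shows "T ((pw p @ pw ri @ wstar (pw ri) @ wstar (pw q)) @ wstar (pw p @ pw rj @ wstar (pw rj) @ wstar (pw q)))
       = T ((pw ri @ wstar (pw ri)) @ wstar (pw rj @ wstar (pw rj)))"
proof -
  let ?P = "pw p" and ?Q = "pw q" and ?Ri = "pw ri" and ?Rj = "pw rj"
  have "T ((?P @ ?Ri @ wstar ?Ri @ wstar ?Q) @ wstar (?P @ ?Rj @ wstar ?Rj @ wstar ?Q))
      = T ((?P @ ?Ri @ wstar ?Ri) @ wstar ?Q @ ?Q @ (?Rj @ wstar ?Rj @ wstar ?P))" by simp
  also have "\<dots> = T ((?P @ ?Ri @ wstar ?Ri) @ [V (p_src rj)] @ ?Rj @ (wstar ?Rj @ wstar ?P))"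
    using P1[OF q, of "?P @ ?Ri @ wstar ?Ri" "?Rj @ wstar ?Rj @ wstar ?P"] pq rj by simp
  also have "\<dots> = T ((?P @ ?Ri @ wstar ?Ri) @ ?Rj @ (wstar ?Rj @ wstar ?P))"
    by (rule P2[OF rj(1)])
  also have "\<dots> = T (?P @ (?Ri @ wstar ?Ri @ ?Rj @ wstar ?Rj @ wstar ?P))" by simp
  also have "\<dots> = T ((?Ri @ wstar ?Ri @ ?Rj @ wstar ?Rj) @ wstar ?P @ ?P @ [])"
    by (subst T_comm) simp
  also have "\<dots> = T ((?Ri @ wstar ?Ri @ ?Rj) @ wstar ?Rj @ [V (p_src rj)] @ [])"
    using P1[OF p, of "?Ri @ wstar ?Ri @ ?Rj @ wstar ?Rj" "[]"] rj by simp
  also have "\<dots> = T ((?Ri @ wstar ?Ri @ ?Rj) @ wstar ?Rj @ [])"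
    by (rule P3[OF rj(1)])
  also have "\<dots> = T ((?Ri @ wstar ?Ri) @ wstar (?Rj @ wstar ?Rj))" by simp
  finally show ?thesis .
qed

lemma K1:
  assumes inj: "inj_on e {..<m}" and k: "k < m"
  shows "(\<Sum>i\<leftarrow>[0..<m]. T (A @ [Gh (e k), Ed (e i), Gh (e i)])) = T (A @ [Gh (e k)])"
proof -
  have "(\<Sum>i\<leftarrow>[0..<m]. T (A @ [Gh (e k), Ed (e i), Gh (e i)])) = T (A @ [Gh (e k), Ed (e k), Gh (e k)])"
  proof (rule sum_list_upt_delta[OF k])
    fix i assume "i < m" "i \<noteq> k"
    hence "e k \<noteq> e i" using inj k by (auto dest: inj_onD)
    thus "T (A @ [Gh (e k), Ed (e i), Gh (e i)]) = 0" using CK1ne[of "e k" "e i" A "[Gh (e i)]"] by simp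
  qed
  also have "\<dots> = T (A @ [V (rng (e k)), Gh (e k)])" using CK1[of A "e k" "[Gh (e k)]"] by simp
  also have "\<dots> = T (A @ [Gh (e k)])" using VGh[of A "e k" "[]"] by simp
  finally show ?thesis .
qed

lemma K2:
  assumes inj: "inj_on e {..<m}" and k: "k < m"
  shows "(\<Sum>i\<leftarrow>[0..<m]. T ([Ed (e i), Gh (e i), Ed (e k)] @ B)) = T ([Ed (e k)] @ B)"
proof -
  have "(\<Sum>i\<leftarrow>[0..<m]. T ([Ed (e i), Gh (e i), Ed (e k)] @ B)) = T ([Ed (e k), Gh (e k), Ed (e k)] @ B)"
  proof (rule sum_list_upt_delta[OF k])
    fix i assume "i < m" "i \<noteq> k"
    hence "e i \<noteq> e k" using inj k by (auto dest: inj_onD)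
    thus "T ([Ed (e i), Gh (e i), Ed (e k)] @ B) = 0" using CK1ne[of "e i" "e k" "[Ed (e i)]" B] by simp
  qed
  also have "\<dots> = T ([Ed (e k), V (rng (e k))] @ B)" using CK1[of "[Ed (e k)]" "e k" B] by simp
  also have "\<dots> = T ([Ed (e k)] @ B)" using EdV[of "[]" "e k" B] by simp
  finally show ?thesis .
qed

end


lemma smult_one[simp]: "fa_smult 1 (f :: ('v,'e,'k::field) fa) = f" by (simp add: fa_smult_def)

lemma pw_ne[simp]: "pw p \<noteq> []" by (simp add: pw_def)

context ctx begin

lemma part1:
  fixes m :: nat and r :: "nat \<Rightarrow> 'v \<times> 'e list" and a :: "nat \<Rightarrow> 'k"
  assumes p: "is_path src rng p" and q: "is_path src rng q" and pq: "p_rng rng p = p_rng rng q"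
    and r: "\<forall>i<m. is_path src rng (r i) \<and> p_src (r i) = p_rng rng p"
  shows "t (fa_mult (fa_sum (\<lambda>i. fa_smult (a i) (fa_word (pw p @ pw (r i) @ wstar (pw (r i)) @ wstar (pw q)))) {..<m})
             (fa_star invK (fa_sum (\<lambda>i. fa_smult (a i) (fa_word (pw p @ pw (r i) @ wstar (pw (r i)) @ wstar (pw q)))) {..<m})))
       = t (fa_mult (fa_sum (\<lambda>i. fa_smult (a i) (fa_word (pw (r i) @ wstar (pw (r i))))) {..<m})
             (fa_star invK (fa_sum (\<lambda>i. fa_smult (a i) (fa_word (pw (r i) @ wstar (pw (r i))))) {..<m})))"
proof -
  define U where "U i = pw p @ pw (r i) @ wstar (pw (r i)) @ wstar (pw q)" for i
  define W where "W i = pw (r i) @ wstar (pw (r i))" for i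
  have key: "\<And>i j. i \<in> set [0..<m] \<Longrightarrow> j \<in> set [0..<m] \<Longrightarrow> T (U i @ wstar (U j)) = T (W i @ wstar (W j))"
    unfolding U_def W_def using r by (intro part1_key[OF p q pq]) auto
  have "S (map (\<lambda>i. (a i, U i)) [0..<m]) (map (\<lambda>i. (a i, U i)) [0..<m])
      = S (map (\<lambda>i. (a i, W i)) [0..<m]) (map (\<lambda>i. (a i, W i)) [0..<m])"
    unfolding S_def using key
    by (simp add: comp_def) (intro arg_cong[where f=sum_list] map_cong refl, simp)
  moreover have "\<forall>(c,u)\<in>set (map (\<lambda>i. (a i, U i)) [0..<m]). u \<noteq> []" by (auto simp: U_def)
  moreover have "\<forall>(c,u)\<in>set (map (\<lambda>i. (a i, W i)) [0..<m]). u \<noteq> []" by (auto simp: W_def)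
  ultimately show ?thesis
    unfolding U_def[symmetric] W_def[symmetric] fa_sum_words
    by (simp add: t_xx)
qed

lemma sm_1: "sm 1 x = x" using R unfolding inv_K_algebra_def by blast

lemma nonneg_sm: "R_nonneg st D \<Longrightarrow> R_nonneg st (sm (a * invK a) D)"
proof -
  assume "R_nonneg st D"
  then obtain zs where D: "D = sum_list (map (\<lambda>z. z * st z) zs)" by (auto simp: R_nonneg_def)
  have "sm (a * invK a) D = sum_list (map (\<lambda>z. z * st z) (map (sm a) zs))"
  proof -
    have "\<And>z. sm a z * st (sm a z) = sm (a * invK a) (z * st z)"
    proof -
      fix z
      have "sm a z * st (sm a z) = sm a z * sm (invK a) (st z)" by (simp add: st_sm)
      also have "\<dots> = sm (invK a) (sm a z * st z)" by (simp add: sm_times_r)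
      also have "\<dots> = sm (invK a) (sm a (z * st z))" by (simp add: sm_times_l)
      also have "\<dots> = sm (a * invK a) (z * st z)" by (metis sm_mult mult.commute)
      finally show "sm a z * st (sm a z) = sm (a * invK a) (z * st z)" .
    qed
    thus ?thesis unfolding D sm_sum_list by (simp add: comp_def)
  qed
  thus ?thesis unfolding R_nonneg_def by blast
qed

lemma part2:
  fixes m :: nat and e :: "nat \<Rightarrow> 'e" and mi :: "nat \<Rightarrow> nat" and r :: "nat \<Rightarrow> nat \<Rightarrow> 'v \<times> 'e list"
    and aa :: "nat \<Rightarrow> nat \<Rightarrow> 'k" and a :: 'k
  assumes P: "condP src rng st t" and inj: "inj_on e {..<m}" and sv: "\<forall>i<m. src (e i) = v"
    and rr: "\<forall>i<m. \<forall>j<mi i. is_path src rng (r i j) \<and> p_src (r i j) = rng (e i)"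
  defines "z \<equiv> fa_sum (\<lambda>i. fa_sum (\<lambda>j. fa_smult (aa i j)
                    (fa_word ([Ed (e i)] @ pw (r i j) @ wstar (pw (r i j)) @ [Gh (e i)]))) {..<mi i}) {..<m}"
  defines "x \<equiv> fa_add z (fa_smult a (fa_word [V v]))"
  defines "y \<equiv> fa_add z (fa_smult a (fa_sum (\<lambda>i. fa_word [Ed (e i), Gh (e i)]) {..<m}))"
  shows "R_ge st (t (fa_mult x (fa_star invK x))) (t (fa_mult y (fa_star invK y)))"
proof -
  define Wd where "Wd i j = [Ed (e i)] @ pw (r i j) @ wstar (pw (r i j)) @ [Gh (e i)]" for i j
  define Z where "Z = concat (map (\<lambda>i. map (\<lambda>j. (aa i j, Wd i j)) [0..<mi i]) [0..<m])"
  define Y where "Y = (map (\<lambda>i. (a, [Ed (e i), Gh (e i)])) [0..<m] :: ('k \<times> ('v,'e) gen list) list)"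
  define av where "av = ([(a, [V v])] :: ('k \<times> ('v,'e) gen list) list)"
  have Zmem: "\<And>c u. (c,u) \<in> set Z \<Longrightarrow> \<exists>k<m. \<exists>j<mi k. u = Wd k j"
    by (fastforce simp: Z_def)
  have zc: "z = comb Z"
    unfolding z_def Z_def Wd_def fa_sum_words by (rule fa_sum_comb)
  have xc: "x = comb (Z @ av)" by (simp add: x_def zc comb_append comb_single av_def)
  have w1: "\<And>u. fa_word u = fa_smult 1 (fa_word u :: ('v,'e,'k) fa)" by (simp add: fa_smult_def)
  have yc: "y = comb (Z @ Y)"
  proof -
    have "(fa_sum (\<lambda>i. fa_word [Ed (e i), Gh (e i)]) {..<m} :: ('v,'e,'k) fa) = comb (map (\<lambda>i. (1, [Ed (e i), Gh (e i)])) [0..<m])"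
      using fa_sum_words[of "\<lambda>_. 1" "\<lambda>i. [Ed (e i), Gh (e i)]" m] by simp
    thus ?thesis by (simp add: y_def zc comb_append comb_smult Y_def comp_def)
  qed
  have neZ: "\<forall>(c,u)\<in>set Z. u \<noteq> []" by (auto simp: Z_def Wd_def)
  have tx: "t (fa_mult x (fa_star invK x)) = S Z Z + S Z av + S av Z + S av av"
    unfolding xc using neZ by (subst t_xx) (auto simp: av_def S_append_l S_append_r)
  have ty: "t (fa_mult y (fa_star invK y)) = S Z Z + S Z Y + S Y Z + S Y Y"
    unfolding yc using neZ by (subst t_xx) (auto simp: Y_def S_append_l S_append_r)
  have elemZ: "\<And>c u P. (c,u) \<in> set Z \<Longrightarrow> (\<And>k j. k < m \<Longrightarrow> j < mi k \<Longrightarrow> P (Wd k j)) \<Longrightarrow> P u"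
    using Zmem by blast
  have c1: "S Z Y = S Z av"
  proof -
    have "\<And>c u. (c,u) \<in> set Z \<Longrightarrow> (\<Sum>(d,w)\<leftarrow>Y. sm (c * invK d) (T (u @ wstar w)))
        = (\<Sum>(d,w)\<leftarrow>av. sm (c * invK d) (T (u @ wstar w)))"
    proof -
      fix c u assume cu: "(c,u) \<in> set Z"
      show "(\<Sum>(d,w)\<leftarrow>Y. sm (c * invK d) (T (u @ wstar w)))
        = (\<Sum>(d,w)\<leftarrow>av. sm (c * invK d) (T (u @ wstar w)))"
      proof (rule elemZ[OF cu])
        fix k j assume k: "k < m" and j: "j < mi k"
        define A where "A = Ed (e k) # pw (r k j) @ wstar (pw (r k j))"
        have "(\<Sum>i\<leftarrow>[0..<m]. T (Wd k j @ wstar [Ed (e i), Gh (e i)])) = T (A @ [Gh (e k)])"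
          using K1[OF inj k, of A] by (simp add: Wd_def A_def)
        also have "\<dots> = T (Wd k j @ wstar [V v])"
          using GhV[of A "e k" "[]"] sv k by (simp add: Wd_def A_def)
        finally have eq: "(\<Sum>i\<leftarrow>[0..<m]. T (Wd k j @ wstar [Ed (e i), Gh (e i)])) = T (Wd k j @ wstar [V v])" .
        have "(\<Sum>(d,w)\<leftarrow>Y. sm (c * invK d) (T (Wd k j @ wstar w)))
            = sm (c * invK a) (\<Sum>i\<leftarrow>[0..<m]. T (Wd k j @ wstar [Ed (e i), Gh (e i)]))"
          by (simp add: Y_def sm_sum_list comp_def)
        also have "\<dots> = (\<Sum>(d,w)\<leftarrow>av. sm (c * invK d) (T (Wd k j @ wstar w)))"
          using eq by (simp add: av_def)
        finally show "(\<Sum>(d,w)\<leftarrow>Y. sm (c * invK d) (T (Wd k j @ wstar w)))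
            = (\<Sum>(d,w)\<leftarrow>av. sm (c * invK d) (T (Wd k j @ wstar w)))" .
      qed
    qed
    thus ?thesis unfolding S_def
      by (intro arg_cong[where f=sum_list] map_cong refl) auto
  qed
  have c2: "S Y Z = S av Z"
  proof -
    have "S Y Z = (\<Sum>i\<leftarrow>[0..<m]. \<Sum>dw\<leftarrow>Z. sm (a * invK (fst dw)) (T ([Ed (e i), Gh (e i)] @ wstar (snd dw))))"
      unfolding S_def Y_def case_prod_beta' by (simp add: comp_def)
    also have "\<dots> = (\<Sum>dw\<leftarrow>Z. \<Sum>i\<leftarrow>[0..<m]. sm (a * invK (fst dw)) (T ([Ed (e i), Gh (e i)] @ wstar (snd dw))))"
      by (rule sum_list_swap)
    also have "\<dots> = (\<Sum>dw\<leftarrow>Z. sm (a * invK (fst dw)) (T ([V v] @ wstar (snd dw))))"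
    proof (intro arg_cong[where f=sum_list] map_cong refl)
      fix dw assume dw: "dw \<in> set Z"
      obtain c u where dwe: "dw = (c,u)" by fastforce
      have "(\<Sum>i\<leftarrow>[0..<m]. sm (a * invK c) (T ([Ed (e i), Gh (e i)] @ wstar u)))
         = sm (a * invK c) (T ([V v] @ wstar u))"
      proof (rule elemZ[of c u])
        show "(c,u) \<in> set Z" using dw dwe by simp
      next
        fix k j assume k: "k < m" and j: "j < mi k"
        define B where "B = pw (r k j) @ wstar (pw (r k j)) @ [Gh (e k)]"
        have "(\<Sum>i\<leftarrow>[0..<m]. T ([Ed (e i), Gh (e i)] @ wstar (Wd k j))) = T ([Ed (e k)] @ B)"
          using K2[OF inj k, of B] by (simp add: Wd_def B_def)
        also have "\<dots> = T ([V v] @ wstar (Wd k j))"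
          using VEd[of "[]" "e k" B] sv k by (simp add: Wd_def B_def)
        finally have eq: "(\<Sum>i\<leftarrow>[0..<m]. T ([Ed (e i), Gh (e i)] @ wstar (Wd k j))) = T ([V v] @ wstar (Wd k j))" .
        show "(\<Sum>i\<leftarrow>[0..<m]. sm (a * invK c) (T ([Ed (e i), Gh (e i)] @ wstar (Wd k j))))
         = sm (a * invK c) (T ([V v] @ wstar (Wd k j)))"
          using eq by (simp add: sm_sum_list[symmetric])
      qed
      thus "(\<Sum>i\<leftarrow>[0..<m]. sm (a * invK (fst dw)) (T ([Ed (e i), Gh (e i)] @ wstar (snd dw))))
         = sm (a * invK (fst dw)) (T ([V v] @ wstar (snd dw)))" by (simp add: dwe)
    qed
    also have "\<dots> = S av Z"
      unfolding S_def av_def case_prod_beta' by simp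
    finally show ?thesis .
  qed
  have c3: "S av av = sm (a * invK a) (T [V v])"
    using VV[of "[]" v "[]"] by (simp add: S_def av_def)
  have c4: "S Y Y = (\<Sum>i\<leftarrow>[0..<m]. sm (a * invK a) (T [V (rng (e i))]))"
  proof -
    have "S Y Y = (\<Sum>i\<leftarrow>[0..<m]. \<Sum>j\<leftarrow>[0..<m]. sm (a * invK a) (T ([Ed (e i)] @ [Gh (e i), Ed (e j), Gh (e j)])))"
      by (simp add: S_def Y_def comp_def)
    also have "\<dots> = (\<Sum>i\<leftarrow>[0..<m]. sm (a * invK a) (T [V (rng (e i))]))"
    proof (intro arg_cong[where f=sum_list] map_cong refl)
      fix i assume "i \<in> set [0..<m]"
      hence i: "i < m" by simp
      have "(\<Sum>j\<leftarrow>[0..<m]. sm (a * invK a) (T ([Ed (e i)] @ [Gh (e i), Ed (e j), Gh (e j)])))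
          = sm (a * invK a) (T ([Ed (e i)] @ [Gh (e i)]))"
        using K1[OF inj i, of "[Ed (e i)]"] by (simp add: sm_sum_list[symmetric])
      also have "\<dots> = sm (a * invK a) (T [V (rng (e i))])"
        using T_comm[of "[Ed (e i)]" "[Gh (e i)]"] CK1[of "[]" "e i" "[]"] by simp
      finally show "(\<Sum>j\<leftarrow>[0..<m]. sm (a * invK a) (T ([Ed (e i)] @ [Gh (e i), Ed (e j), Gh (e j)])))
          = sm (a * invK a) (T [V (rng (e i))])" .
    qed
    finally show ?thesis .
  qed
  define D where "D = t (fa_diff (fa_word [V v]) (fa_sum (\<lambda>x. fa_word [V (rng x)]) (e ` {..<m})))"
  have Dnn: "R_nonneg st D"
  proof -
    have "finite (e ` {..<m}) \<and> e ` {..<m} \<subseteq> {x. src x = v}" using sv by auto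
    thus ?thesis using P unfolding condP_def D_def by blast
  qed
  have fs: "(fa_sum (\<lambda>x. fa_word [V (rng x)]) (e ` {..<m}) :: ('v,'e,'k) fa)
      = comb (map (\<lambda>i. (1, [V (rng (e i))])) [0..<m])"
  proof -
    have "(fa_sum (\<lambda>x. fa_word [V (rng x)]) (e ` {..<m}) :: ('v,'e,'k) fa)
        = fa_sum (\<lambda>i. fa_smult 1 (fa_word [V (rng (e i))])) {..<m}"
      unfolding fa_sum_def by (simp add: sum.reindex[OF inj] comp_def)
    thus ?thesis by (simp only: fa_sum_words)
  qed
  have Dval: "D = T [V v] - (\<Sum>i\<leftarrow>[0..<m]. T [V (rng (e i))])"
  proof -
    have "D = T [V v] - t (comb (map (\<lambda>i. (1::'k, [V (rng (e i))])) [0..<m]))"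
      unfolding D_def fs by (rule t_diff) (auto intro: word_FA comb_FA)
    also have "t (comb (map (\<lambda>i. (1::'k, [V (rng (e i))])) [0..<m])) = (\<Sum>i\<leftarrow>[0..<m]. T [V (rng (e i))])"
      by (subst t_comb) (auto simp: comp_def sm_1)
    finally show ?thesis .
  qed
  have "t (fa_mult x (fa_star invK x)) - t (fa_mult y (fa_star invK y)) = sm (a * invK a) D"
    unfolding tx ty c1 c2 c3 c4 Dval sm_diff sm_sum_list by simp
  thus ?thesis unfolding R_ge_def using nonneg_sm[OF Dnn] by simp
qed
end

theorem lemma3p3:
  fixes src rng :: "'e \<Rightarrow> 'v"
    and invK :: "'k::field \<Rightarrow> 'k"
    and sm :: "'k \<Rightarrow> 'r::ring \<Rightarrow> 'r"
    and st :: "'r \<Rightarrow> 'r"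
    and t :: "('v, 'e, 'k) fa \<Rightarrow> 'r"
  assumes invK: "field_involution invK"
    and R: "inv_K_algebra invK sm st"
    and tr: "LPA_trace src rng t"
    and lin: "K_linear sm t"
    and can: "canonical src rng t"
  shows
    "(\<forall>p q (m::nat) (r :: nat \<Rightarrow> 'v \<times> 'e list) (a :: nat \<Rightarrow> 'k).
        is_path src rng p \<and> is_path src rng q \<and> p_rng rng p = p_rng rng q \<and>
        (\<forall>i<m. is_path src rng (r i) \<and> p_src (r i) = p_rng rng p) \<longrightarrow>
        (let x = fa_sum (\<lambda>i. fa_smult (a i) (fa_word (pw p @ pw (r i) @ wstar (pw (r i)) @ wstar (pw q)))) {..<m};
             y = fa_sum (\<lambda>i. fa_smult (a i) (fa_word (pw (r i) @ wstar (pw (r i))))) {..<m}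
         in t (fa_mult x (fa_star invK x)) = t (fa_mult y (fa_star invK y))))
     \<and>
     (condP src rng st t \<longrightarrow>
      (\<forall>v (m::nat) (e :: nat \<Rightarrow> 'e) (mi :: nat \<Rightarrow> nat) (r :: nat \<Rightarrow> nat \<Rightarrow> 'v \<times> 'e list)
          (aa :: nat \<Rightarrow> nat \<Rightarrow> 'k) (a :: 'k).
        inj_on e {..<m} \<and> (\<forall>i<m. src (e i) = v) \<and>
        (\<forall>i<m. \<forall>j<mi i. is_path src rng (r i j) \<and> p_src (r i j) = rng (e i)) \<longrightarrow>
        (let z = fa_sum (\<lambda>i. fa_sum (\<lambda>j. fa_smult (aa i j)
                    (fa_word ([Ed (e i)] @ pw (r i j) @ wstar (pw (r i j)) @ [Gh (e i)]))) {..<mi i}) {..<m};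
             x = fa_add z (fa_smult a (fa_word [V v]));
             y = fa_add z (fa_smult a (fa_sum (\<lambda>i. fa_word [Ed (e i), Gh (e i)]) {..<m}))
         in R_ge st (t (fa_mult x (fa_star invK x))) (t (fa_mult y (fa_star invK y))))))"
proof -
  interpret ctx src rng invK sm st t using invK R tr lin by (rule ctx.intro)
  show ?thesis
    unfolding Let_def
    apply (intro conjI allI impI)
     apply (rule part1; blast)
    apply (rule part2; blast)
    done
qed

end
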